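(* For every positive integer $n$ there exist a non degenerate circuit $\mathcal{C}\subset\mathbb{Z}^n$ and a generic real polynomial system supported on $\mathcal{C}$ having exactly $n+1$ positive solutions.
   Context: A circuit is a set $\mathcal{C}\subset\mathbb{Z}^n$ of $n+2$ points whose affine span is $\mathbb{R}^n$; it is non degenerate if every proper subset of $\mathcal{C}$ is affinely independent. A real polynomial system supported on $\mathcal{C}$ is a system of $n$ Laurent polynomial equations $F_1=\dots=F_n=0$ in $x=(x_1,\dots,x_n)$ with real coefficients, where each $F_j$ has support $\mathcal{C}$ (the set of exponent vectors of its monomials with nonzero coefficient). Such a system is generic if its number of solutions in $(\mathbb{C}^* )^n$ equals the normalized volume $v(\mathcal{C})$ of the convex hull of $\mathcal{C}$ (normalized so that $[0,1]^n$ has volume $n!$). Positive solutions are solutions in $(\mathbb{R}_{>0})^n$. *)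

theory Defs
  imports "HOL-Analysis.Analysis"
begin

text \<open>Integer points of Z^n are modelled as int^'n, the dimension n being CARD('n).\<close>

definition real_pt :: "int ^ 'n \<Rightarrow> real ^ 'n" where
  "real_pt a = (\<chi> i. real_of_int (a $ i))"

definition is_circuit :: "(int ^ 'n::finite) set \<Rightarrow> bool" where
  "is_circuit C \<longleftrightarrow> finite C \<and> card C = CARD('n) + 2 \<and>
      affine hull (real_pt ` C) = UNIV"

definition nondegenerate_circuit :: "(int ^ 'n::finite) set \<Rightarrow> bool" where
  "nondegenerate_circuit C \<longleftrightarrow> is_circuit C \<and>
      (\<forall>S. S \<subset> real_pt ` C \<longrightarrow> \<not> affine_dependent S)"

definition normalized_volume :: "(int ^ 'n::finite) set \<Rightarrow> real" where
  "normalized_volume C = fact CARD('n) * measure lborel (convex hull (real_pt ` C))"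

definition laurent_monomial :: "'a::{real_field} ^ 'n::finite \<Rightarrow> int ^ 'n \<Rightarrow> 'a" where
  "laurent_monomial x a = (\<Prod>i\<in>UNIV. (x $ i) powi (a $ i))"

definition laurent_eval ::
  "('n::finite \<Rightarrow> int ^ 'n \<Rightarrow> real) \<Rightarrow> (int ^ 'n) set \<Rightarrow> 'n \<Rightarrow> 'a::real_field ^ 'n \<Rightarrow> 'a" where
  "laurent_eval c C j x = (\<Sum>a\<in>C. of_real (c j a) * laurent_monomial x a)"

text \<open>A real system supported on C: every F_j has support exactly C.\<close>
definition supported_on :: "('n::finite \<Rightarrow> int ^ 'n \<Rightarrow> real) \<Rightarrow> (int ^ 'n) set \<Rightarrow> bool" where
  "supported_on c C \<longleftrightarrow> (\<forall>j a. a \<in> C \<longrightarrow> c j a \<noteq> 0)"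

definition complex_torus_solutions ::
  "('n::finite \<Rightarrow> int ^ 'n \<Rightarrow> real) \<Rightarrow> (int ^ 'n) set \<Rightarrow> (complex ^ 'n) set" where
  "complex_torus_solutions c C =
     {x. (\<forall>i. x $ i \<noteq> 0) \<and> (\<forall>j. laurent_eval c C j x = 0)}"

definition positive_solutions ::
  "('n::finite \<Rightarrow> int ^ 'n \<Rightarrow> real) \<Rightarrow> (int ^ 'n) set \<Rightarrow> (real ^ 'n) set" where
  "positive_solutions c C =
     {x. (\<forall>i. x $ i > 0) \<and> (\<forall>j. laurent_eval c C j x = 0)}"

definition generic_system :: "('n::finite \<Rightarrow> int ^ 'n \<Rightarrow> real) \<Rightarrow> (int ^ 'n) set \<Rightarrow> bool" where
  "generic_system c C \<longleftrightarrow> finite (complex_torus_solutions c C) \<and>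
     real (card (complex_torus_solutions c C)) = normalized_volume C"

end

theory Submission
  imports Defs "HOL-Library.Countable"
begin


typedef 'a wo = "UNIV :: 'a set" morphisms rep_wo abs_wo by auto

instantiation wo :: (finite) finite
begin
instance proof
  have "(UNIV :: 'a wo set) = range (abs_wo :: 'a \<Rightarrow> 'a wo)"
    by (metis rep_wo_inverse surj_def)
  moreover have "finite (range (abs_wo :: 'a \<Rightarrow> 'a wo))" by simp
  ultimately show "finite (UNIV :: 'a wo set)" by simp
qed
end

instantiation wo :: (finite) linorder
begin
definition less_eq_wo :: "'a wo \<Rightarrow> 'a wo \<Rightarrow> bool" where
  "less_eq_wo a b \<longleftrightarrow> to_nat (rep_wo a) \<le> to_nat (rep_wo b)"
definition less_wo :: "'a wo \<Rightarrow> 'a wo \<Rightarrow> bool" where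
  "less_wo a b \<longleftrightarrow> to_nat (rep_wo a) < to_nat (rep_wo b)"
instance proof
  fix x y :: "'a wo"
  assume "x \<le> y" "y \<le> x"
  then have "to_nat (rep_wo x) = to_nat (rep_wo y)" by (simp add: less_eq_wo_def)
  then show "x = y" by (simp add: rep_wo_inject)
qed (auto simp: less_eq_wo_def less_wo_def)
end

instantiation wo :: (finite) wellorder
begin
instance proof
  fix P :: "'a wo \<Rightarrow> bool" and a :: "'a wo"
  assume H: "\<And>x. (\<And>y. y < x \<Longrightarrow> P y) \<Longrightarrow> P x"
  have "\<And>x. to_nat (rep_wo x) = m \<Longrightarrow> P x" for m
  proof (induction m rule: less_induct)
    case (less m)
    show ?case
      by (rule H) (use less in \<open>auto simp: less_wo_def\<close>)
  qed
  then show "P a" by blast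
qed
end

lemma card_wo: "CARD('a::finite wo) = CARD('a)"
  using type_definition.card[OF type_definition_wo] by simp
lemma Basis_vec_range: "(Basis :: (real^'n) set) = range (\<lambda>i. axis i 1)"
  by (auto simp: Basis_vec_def)

lemma prod_Basis_vec: "(\<Prod>b\<in>(Basis :: (real^'n) set). g b) = (\<Prod>i\<in>UNIV. g (axis i 1))"
proof -
  have "inj (\<lambda>i::'n. axis i (1::real))" by (auto intro!: injI simp: axis_eq_axis)
  then show ?thesis unfolding Basis_vec_range by (simp add: prod.reindex)
qed

definition phi :: "real^('n::finite wo) \<Rightarrow> real^'n" where "phi y = (\<chi> i. y $ abs_wo i)"
definition psi :: "real^('n::finite) \<Rightarrow> real^('n wo)" where "psi x = (\<chi> j. x $ rep_wo j)"

lemma phi_psi [simp]: "phi (psi x) = x"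
  by (simp add: phi_def psi_def abs_wo_inverse vec_eq_iff)

lemma psi_phi [simp]: "psi (phi y) = y"
  by (simp add: phi_def psi_def rep_wo_inverse vec_eq_iff)

lemma linear_phi: "linear phi"
  by (rule linearI) (auto simp: phi_def vec_eq_iff)

lemma continuous_phi: "continuous_on UNIV phi"
  using linear_phi linear_conv_bounded_linear linear_continuous_on by blast

lemma phi_measurable [measurable]: "phi \<in> borel_measurable borel"
  by (intro borel_measurable_continuous_onI continuous_phi)

lemma lborel_phi: "distr lborel borel phi = (lborel :: (real^'n::finite) measure)"
proof (rule lborel_eqI[symmetric])
  fix l u :: "real^'n"
  assume le: "\<And>b. b \<in> Basis \<Longrightarrow> l \<bullet> b \<le> u \<bullet> b"
  have pre: "phi -` box l u = box (psi l) (psi u)"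
  proof -
    have "y \<in> phi -` box l u \<longleftrightarrow> y \<in> box (psi l) (psi u)" for y
    proof -
      have "y \<in> phi -` box l u \<longleftrightarrow> (\<forall>i. l$i < y $ abs_wo i \<and> y $ abs_wo i < u$i)"
        by (simp add: mem_box_cart phi_def)
      also have "\<dots> \<longleftrightarrow> (\<forall>j. l $ rep_wo j < y $ j \<and> y $ j < u $ rep_wo j)"
      proof
        assume H: "\<forall>i. l$i < y $ abs_wo i \<and> y $ abs_wo i < u$i"
        show "\<forall>j. l $ rep_wo j < y $ j \<and> y $ j < u $ rep_wo j"
        proof
          fix j show "l $ rep_wo j < y $ j \<and> y $ j < u $ rep_wo j"
            using H[rule_format, of "rep_wo j"] by (simp add: rep_wo_inverse)
        qed
      next
        assume H: "\<forall>j. l $ rep_wo j < y $ j \<and> y $ j < u $ rep_wo j"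
        show "\<forall>i. l$i < y $ abs_wo i \<and> y $ abs_wo i < u$i"
        proof
          fix i show "l$i < y $ abs_wo i \<and> y $ abs_wo i < u$i"
            using H[rule_format, of "abs_wo i"] by (simp add: abs_wo_inverse)
        qed
      qed
      also have "\<dots> \<longleftrightarrow> y \<in> box (psi l) (psi u)"
        by (simp add: mem_box_cart psi_def)
      finally show ?thesis .
    qed
    then show ?thesis by blast
  qed
  have le2: "\<And>b. b \<in> Basis \<Longrightarrow> psi l \<bullet> b \<le> psi u \<bullet> b"
  proof -
    fix b :: "real^'n wo" assume "b \<in> Basis"
    then obtain j where b: "b = axis j 1" by (auto simp: Basis_vec_range)
    have "l \<bullet> axis (rep_wo j) 1 \<le> u \<bullet> axis (rep_wo j) 1"
      by (rule le) (auto simp: Basis_vec_range)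
    then show "psi l \<bullet> b \<le> psi u \<bullet> b" by (simp add: b inner_axis psi_def)
  qed
  have "emeasure (distr lborel borel phi) (box l u) = emeasure lborel (box (psi l) (psi u))"
    by (simp add: emeasure_distr pre)
  also have "\<dots> = (\<Prod>b\<in>Basis. (psi u - psi l) \<bullet> b)"
    using le2 by (simp add: emeasure_lborel_box_eq)
  also have "(\<Prod>b\<in>Basis. (psi u - psi l) \<bullet> b) = (\<Prod>j\<in>UNIV. u $ rep_wo j - l $ rep_wo j)"
    by (simp add: prod_Basis_vec inner_axis psi_def)
  also have "\<dots> = (\<Prod>i\<in>UNIV. u $ i - l $ i)"
  proof -
    have "bij_betw rep_wo (UNIV :: 'n wo set) (UNIV :: 'n set)"
      by (rule bij_betwI[where g=abs_wo]) (auto simp: abs_wo_inverse rep_wo_inverse)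
    then show ?thesis by (rule prod.reindex_bij_betw)
  qed
  also have "\<dots> = (\<Prod>b\<in>Basis. (u - l) \<bullet> b)"
    by (simp add: prod_Basis_vec inner_axis)
  finally show "emeasure (distr lborel borel phi) (box l u) = (\<Prod>b\<in>Basis. (u - l) \<bullet> b)" .
qed simp

lemma measure_phi_image:
  assumes "S \<in> sets borel"
  shows "measure lborel (phi ` S) = measure lborel (S :: (real^('n::finite wo)) set)"
proof -
  have inj: "inj phi" by (rule inj_on_inverseI[of _ psi]) simp
  have "phi ` S = psi -` S"
  proof (rule set_eqI)
    fix x :: "real^'n"
    show "x \<in> phi ` S \<longleftrightarrow> x \<in> psi -` S"
    proof
      assume "x \<in> phi ` S" then obtain y where "y \<in> S" "x = phi y" by blast
      then show "x \<in> psi -` S" by simp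
    next
      assume "x \<in> psi -` S" then have "phi (psi x) \<in> phi ` S" by blast
      then show "x \<in> phi ` S" by simp
    qed
  qed
  have m: "psi \<in> borel_measurable borel"
  proof -
    have "linear psi" by (rule linearI) (auto simp: psi_def vec_eq_iff)
    then have "continuous_on UNIV psi"
      using linear_conv_bounded_linear linear_continuous_on by blast
    then show ?thesis by (intro borel_measurable_continuous_onI)
  qed
  have ps: "phi ` S \<in> sets borel"
    using \<open>phi ` S = psi -` S\<close> measurable_sets_borel[OF m assms] by simp
  have "measure lborel (phi ` S) = measure (distr lborel borel phi) (phi ` S)"
    by (simp add: lborel_phi)
  also have "\<dots> = measure lborel (phi -` phi ` S)"
    using ps by (simp add: measure_distr)
  also have "phi -` phi ` S = S" using inj by (rule inj_vimage_image_eq)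
  finally show ?thesis .
qed


lemma row_mat1: "row j (mat 1 :: real^'n^'n) = axis j 1"
  by (simp add: row_def mat_def axis_def vec_eq_iff)

lemma simplex_measure_wo:
  fixes q :: "real^'m::{finite,wellorder}" and i :: 'm
  assumes qi: "q$i \<noteq> 0"
  shows "measure lborel (convex hull (insert 0 (insert q (Basis - {axis i 1})))) = \<bar>q$i\<bar> / fact CARD('m)"
proof -
  define f where "f j = (if j = i then q else axis j 1)" for j
  define X where "X = insert 0 (insert q (Basis - {axis i (1::real)}))"
  have q0: "q \<noteq> 0" using qi by auto
  have injf: "inj f"
  proof (rule injI)
    fix a b assume "f a = f b"
    then show "a = b" using qi
      by (auto simp: f_def axis_eq_axis split: if_splits; simp add: axis_def)
  qed
  have img: "range f = insert q (Basis - {axis i 1})"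
  proof
    show "range f \<subseteq> insert q (Basis - {axis i 1})"
      by (auto simp: f_def Basis_vec_range axis_eq_axis)
    show "insert q (Basis - {axis i 1}) \<subseteq> range f"
    proof
      fix x assume "x \<in> insert q (Basis - {axis i (1::real)})"
      then consider "x = q" | j where "x = axis j 1" "j \<noteq> i"
        by (auto simp: Basis_vec_range)
      then show "x \<in> range f"
      proof cases
        case 1 then show ?thesis by (metis f_def rangeI)
      next
        case 2 then show ?thesis by (metis f_def rangeI)
      qed
    qed
  qed
  have zero_notin: "0 \<notin> range f"
    using q0 by (auto simp: f_def axis_eq_axis)
  have XD: "X - {0} = range f" using img zero_notin by (auto simp: X_def)
  have X2: "X = insert 0 (range f)" using img by (auto simp: X_def)
  have finX: "finite X" by (simp add: X_def)
  have cardX: "card X = Suc CARD('m)"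
    using X2 zero_notin card_image[OF injf] by simp
  have bij: "bij_betw f UNIV (X - {0})"
    using injf XD by (simp add: bij_betw_def)
  define M where "M = (\<chi> r c. f c $ r - 0 $ r)"
  have "measure lborel (convex hull X) = \<bar>det M\<bar> / fact CARD('m)"
    unfolding M_def by (rule content_simplex[OF finX cardX _ bij]) (simp add: X_def)
  moreover have "det M = q$i"
  proof -
    have "transpose M = (\<chi> k. if k = i then sum (\<lambda>j. q$j *s row j (mat 1)) UNIV else row k (mat 1))"
      by (simp add: transpose_def M_def row_mat1 basis_expansion f_def vec_eq_iff)
    then have "det (transpose M) = q$i"
      using cramer_lemma_transpose[of i q "mat 1"] by simp
    then show ?thesis by simp
  qed
  ultimately show ?thesis by (simp add: X_def)
qed

lemma simplex_measure:
  fixes q :: "real^'n::finite" and i :: 'n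
  assumes qi: "q$i \<noteq> 0"
  shows "measure lborel (convex hull (insert 0 (insert q (Basis - {axis i 1})))) = \<bar>q$i\<bar> / fact CARD('n)"
proof -
  define S where "S = convex hull (insert 0 (insert (psi q) (Basis - {axis (abs_wo i) 1})))"
  have qi': "psi q $ abs_wo i \<noteq> 0" using qi by (simp add: psi_def abs_wo_inverse)
  have mS: "measure lborel S = \<bar>q$i\<bar> / fact CARD('n)"
    using simplex_measure_wo[OF qi'] by (simp add: S_def card_wo psi_def abs_wo_inverse)
  have "S \<in> sets borel"
    unfolding S_def by (intro borel_closed compact_imp_closed finite_imp_compact_convex_hull) simp
  then have "measure lborel (phi ` S) = measure lborel S" by (rule measure_phi_image)
  moreover have "phi ` S = convex hull (insert 0 (insert q (Basis - {axis i 1})))"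
  proof -
    have "phi ` S = convex hull (phi ` (insert 0 (insert (psi q) (Basis - {axis (abs_wo i) 1}))))"
      unfolding S_def by (rule convex_hull_linear_image[OF linear_phi])
    moreover have "phi ` (insert 0 (insert (psi q) (Basis - {axis (abs_wo i) 1}))) =
                   insert 0 (insert q (Basis - {axis i 1}))"
    proof -
      have ax: "phi (axis j 1) = axis (rep_wo j) 1" for j :: "'n wo"
      proof -
        have e: "abs_wo k = j \<longleftrightarrow> k = rep_wo j" for k
          by (metis abs_wo_inverse[OF UNIV_I] rep_wo_inverse)
        show ?thesis by (simp add: phi_def axis_def vec_eq_iff e)
      qed
      have "phi ` (Basis - {axis (abs_wo i) 1}) = Basis - {axis i 1}"
      proof
        show "phi ` (Basis - {axis (abs_wo i) 1}) \<subseteq> Basis - {axis i 1}"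
          by (auto simp: Basis_vec_range ax axis_eq_axis abs_wo_inverse rep_wo_inverse)
        show "Basis - {axis i 1} \<subseteq> phi ` (Basis - {axis (abs_wo i) 1})"
        proof
          fix x assume "x \<in> Basis - {axis i (1::real)}"
          then obtain k where k: "x = axis k 1" "k \<noteq> i" by (auto simp: Basis_vec_range)
          have "abs_wo k \<noteq> abs_wo i" using k(2) by (simp add: abs_wo_inject)
          then have "axis (abs_wo k) (1::real) \<in> Basis - {axis (abs_wo i) 1}"
            by (auto simp: Basis_vec_range axis_eq_axis)
          moreover have "phi (axis (abs_wo k) 1) = x" by (simp add: ax abs_wo_inverse k)
          ultimately show "x \<in> phi ` (Basis - {axis (abs_wo i) 1})" by (metis imageI)
        qed
      qed
      moreover have "phi (0::real^'n wo) = 0" by (simp add: phi_def vec_eq_iff)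
      ultimately show ?thesis by (simp del: insert_Diff_single)
    qed
    ultimately show ?thesis by simp
  qed
  ultimately show ?thesis using mS by simp
qed


lemma lborel_lebesgue_compact:
  fixes S :: "'a::euclidean_space set"
  assumes "compact S"
  shows "measure lborel S = measure lebesgue S"
  using assms by (simp add: measure_completion borel_compact)

lemma sum_drop0:
  assumes "finite X" "c \<in> X" "f c = 0"
  shows "sum f X = sum f (X - {c})"
  using sum.remove[OF assms(1,2), of f] assms(3) by simp

lemma triangulation_cover:
  fixes X :: "'a::euclidean_space set" and lam :: "'a \<Rightarrow> real"
  assumes finX: "finite X"
    and sum0: "sum lam X = 0" and vec0: "(\<Sum>x\<in>X. lam x *\<^sub>R x) = 0"
    and pos: "\<exists>c\<in>X. lam c > 0"
  shows "convex hull X = (\<Union>c\<in>{c\<in>X. lam c > 0}. convex hull (X - {c}))"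
proof
  show "(\<Union>c\<in>{c\<in>X. lam c > 0}. convex hull (X - {c})) \<subseteq> convex hull X"
    by (auto intro: hull_mono[THEN subsetD, of "X - {_}" X])
  show "convex hull X \<subseteq> (\<Union>c\<in>{c\<in>X. lam c > 0}. convex hull (X - {c}))"
  proof
    fix x assume "x \<in> convex hull X"
    then obtain u where u0: "\<forall>y\<in>X. 0 \<le> u y" and u1: "sum u X = 1" and ux: "(\<Sum>y\<in>X. u y *\<^sub>R y) = x"
      using finX by (auto simp: convex_hull_finite)
    define P where "P = {c\<in>X. lam c > 0}"
    have finP: "finite P" using finX by (simp add: P_def)
    have neP: "P \<noteq> {}" using pos by (auto simp: P_def)
    define t where "t = Min ((\<lambda>c. u c / lam c) ` P)"
    have "t \<in> (\<lambda>c. u c / lam c) ` P"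
      unfolding t_def by (rule Min_in) (use finP neP in auto)
    then obtain c0 where c0: "c0 \<in> P" "t = u c0 / lam c0" by blast
    have tle: "t \<le> u c / lam c" if "c \<in> P" for c
      unfolding t_def using finP that by (intro Min_le) auto
    have t0: "0 \<le> t" using c0 u0 by (auto simp: P_def)
    define u' where "u' y = u y - t * lam y" for y
    have u'0: "0 \<le> u' y" if "y \<in> X" for y
    proof (cases "lam y > 0")
      case True
      then have "t \<le> u y / lam y" using tle that by (auto simp: P_def)
      then show ?thesis using True by (simp add: u'_def field_simps)
    next
      case False
      then have "t * lam y \<le> 0" using t0 by (simp add: mult_nonneg_nonpos not_less)
      moreover have "0 \<le> u y" using u0 that by blast
      ultimately show ?thesis unfolding u'_def by linarith
    qed
    have u'c0: "u' c0 = 0" using c0 by (auto simp: u'_def P_def)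
    have su': "sum u' X = 1"
      by (simp add: u'_def sum_subtractf u1 sum_distrib_left[symmetric] sum0)
    have vu': "(\<Sum>y\<in>X. u' y *\<^sub>R y) = x"
    proof -
      have "(\<Sum>y\<in>X. u' y *\<^sub>R y) = (\<Sum>y\<in>X. u y *\<^sub>R y) - t *\<^sub>R (\<Sum>y\<in>X. lam y *\<^sub>R y)"
        by (simp add: u'_def scaleR_diff_left sum_subtractf scaleR_sum_right)
      then show ?thesis using ux vec0 by simp
    qed
    have c0X: "c0 \<in> X" using c0 by (simp add: P_def)
    have "sum u' (X - {c0}) = 1"
      using su' u'c0 finX c0X by (simp add: sum_diff1)
    moreover have "(\<Sum>y\<in>X - {c0}. u' y *\<^sub>R y) = x"
      using vu' u'c0 finX c0X by (simp add: sum_diff1)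
    ultimately have "x \<in> convex hull (X - {c0})"
      using finX u'0 by (auto simp: convex_hull_finite intro!: exI[of _ u'])
    then show "x \<in> (\<Union>c\<in>{c\<in>X. lam c > 0}. convex hull (X - {c}))"
      using c0 by (auto simp: P_def)
  qed
qed

lemma triangulation_inter:
  fixes X :: "'a::euclidean_space set" and lam :: "'a \<Rightarrow> real"
  assumes finX: "finite X"
    and uniq: "\<And>u. sum u X = 0 \<Longrightarrow> (\<Sum>x\<in>X. u x *\<^sub>R x) = 0 \<Longrightarrow> \<exists>s. \<forall>x\<in>X. u x = s * lam x"
    and c: "c \<in> X" "lam c > 0" and c': "c' \<in> X" "lam c' > 0" and cc: "c \<noteq> c'"
  shows "convex hull (X - {c}) \<inter> convex hull (X - {c'}) \<subseteq> convex hull (X - {c, c'})"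
proof
  fix x assume x: "x \<in> convex hull (X - {c}) \<inter> convex hull (X - {c'})"
  then obtain u where u0: "\<forall>y\<in>X - {c}. 0 \<le> u y" and u1: "sum u (X - {c}) = 1"
      and ux: "(\<Sum>y\<in>X - {c}. u y *\<^sub>R y) = x"
    using finX by (auto simp: convex_hull_finite)
  obtain v where v0: "\<forall>y\<in>X - {c'}. 0 \<le> v y" and v1: "sum v (X - {c'}) = 1"
      and vx: "(\<Sum>y\<in>X - {c'}. v y *\<^sub>R y) = x"
    using x finX by (auto simp: convex_hull_finite)
  define U where "U y = (if y = c then 0 else u y)" for y
  define V where "V y = (if y = c' then 0 else v y)" for y
  have U1: "sum U X = 1"
  proof -
    have "sum U X = sum U (X - {c})" using finX c by (intro sum_drop0) (auto simp: U_def)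
    also have "\<dots> = sum u (X - {c})" by (rule sum.cong) (auto simp: U_def)
    finally show ?thesis using u1 by simp
  qed
  have V1: "sum V X = 1"
  proof -
    have "sum V X = sum V (X - {c'})" using finX c' by (intro sum_drop0) (auto simp: V_def)
    also have "\<dots> = sum v (X - {c'})" by (rule sum.cong) (auto simp: V_def)
    finally show ?thesis using v1 by simp
  qed
  have Ux: "(\<Sum>y\<in>X. U y *\<^sub>R y) = x"
  proof -
    have "(\<Sum>y\<in>X. U y *\<^sub>R y) = (\<Sum>y\<in>X - {c}. U y *\<^sub>R y)" using finX c by (intro sum_drop0) (auto simp: U_def)
    also have "\<dots> = (\<Sum>y\<in>X - {c}. u y *\<^sub>R y)" by (rule sum.cong) (auto simp: U_def)
    finally show ?thesis using ux by simp
  qed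
  have Vx: "(\<Sum>y\<in>X. V y *\<^sub>R y) = x"
  proof -
    have "(\<Sum>y\<in>X. V y *\<^sub>R y) = (\<Sum>y\<in>X - {c'}. V y *\<^sub>R y)" using finX c' by (intro sum_drop0) (auto simp: V_def)
    also have "\<dots> = (\<Sum>y\<in>X - {c'}. v y *\<^sub>R y)" by (rule sum.cong) (auto simp: V_def)
    finally show ?thesis using vx by simp
  qed
  have "sum (\<lambda>y. U y - V y) X = 0" using U1 V1 by (simp add: sum_subtractf)
  moreover have "(\<Sum>y\<in>X. (U y - V y) *\<^sub>R y) = 0" using Ux Vx by (simp add: scaleR_diff_left sum_subtractf)
  ultimately obtain s where s: "\<forall>y\<in>X. U y - V y = s * lam y" using uniq by blast
  have "U c - V c = s * lam c" using s c by blast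
  moreover have "V c \<ge> 0" using v0 c cc by (simp add: V_def)
  moreover have "U c = 0" by (simp add: U_def)
  ultimately have "s * lam c \<le> 0" by linarith
  then have s1: "s \<le> 0" using c by (simp add: mult_le_0_iff)
  have "U c' - V c' = s * lam c'" using s c' by blast
  moreover have "U c' \<ge> 0" using u0 c' cc by (simp add: U_def)
  moreover have "V c' = 0" by (simp add: V_def)
  ultimately have "s * lam c' \<ge> 0" by linarith
  then have s2: "s \<ge> 0" using c' by (simp add: zero_le_mult_iff)
  have UV: "\<forall>y\<in>X. U y = V y" using s s1 s2 by auto
  have Uc': "U c' = 0" using UV c' by (simp add: V_def)
  have Uc: "U c = 0" by (simp add: U_def)
  have U0: "\<forall>y\<in>X - {c, c'}. 0 \<le> U y" using u0 by (auto simp: U_def)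
  have "sum U (X - {c, c'}) = 1"
  proof -
    have "sum U X = sum U (X - {c, c'}) + sum U {c, c'}"
      by (rule sum.subset_diff) (use c c' finX in auto)
    then show ?thesis using U1 Uc Uc' cc by simp
  qed
  moreover have "(\<Sum>y\<in>X - {c, c'}. U y *\<^sub>R y) = x"
  proof -
    have "(\<Sum>y\<in>X. U y *\<^sub>R y) = (\<Sum>y\<in>X - {c, c'}. U y *\<^sub>R y) + (\<Sum>y\<in>{c, c'}. U y *\<^sub>R y)"
      by (rule sum.subset_diff) (use c c' finX in auto)
    then show ?thesis using Ux Uc Uc' cc by simp
  qed
  ultimately show "x \<in> convex hull (X - {c, c'})"
    using finX U0 by (auto simp: convex_hull_finite intro!: exI[of _ U])
qed

lemma triangulation_measure:
  fixes X :: "'a::euclidean_space set" and lam :: "'a \<Rightarrow> real"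
  assumes finX: "finite X"
    and sum0: "sum lam X = 0" and vec0: "(\<Sum>x\<in>X. lam x *\<^sub>R x) = 0"
    and uniq: "\<And>u. sum u X = 0 \<Longrightarrow> (\<Sum>x\<in>X. u x *\<^sub>R x) = 0 \<Longrightarrow> \<exists>s. \<forall>x\<in>X. u x = s * lam x"
    and low: "\<And>c c'. c \<in> X \<Longrightarrow> c' \<in> X \<Longrightarrow> c \<noteq> c' \<Longrightarrow> negligible (convex hull (X - {c, c'}))"
    and pos: "\<exists>c\<in>X. lam c > 0"
  shows "measure lborel (convex hull X) = (\<Sum>c\<in>{c\<in>X. lam c > 0}. measure lborel (convex hull (X - {c})))"
proof -
  define P where "P = {c\<in>X. lam c > 0}"
  have finP: "finite P" using finX by (simp add: P_def)
  have comp: "compact (convex hull S)" if "S \<subseteq> X" for S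
    using finX that by (intro finite_imp_compact_convex_hull) (auto intro: finite_subset)
  have cov: "convex hull X = (\<Union>c\<in>P. convex hull (X - {c}))"
    unfolding P_def by (rule triangulation_cover[OF finX sum0 vec0 pos])
  have "measure lborel (convex hull X) = measure lebesgue (convex hull X)"
    by (rule lborel_lebesgue_compact[OF comp]) simp
  also have "\<dots> = measure lebesgue (\<Union>c\<in>P. convex hull (X - {c}))"
    by (simp only: cov)
  also have "\<dots> = (\<Sum>c\<in>P. measure lebesgue (convex hull (X - {c})))"
  proof (rule measure_negligible_finite_Union_image[OF finP])
    show "convex hull (X - {c}) \<in> lmeasurable" for c
      by (rule lmeasurable_compact[OF comp]) auto
    show "pairwise (\<lambda>c c'. negligible (convex hull (X - {c}) \<inter> convex hull (X - {c'}))) P"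
      unfolding pairwise_def
    proof (intro ballI impI)
      fix c c' assume "c \<in> P" "c' \<in> P" "c \<noteq> c'"
      then show "negligible (convex hull (X - {c}) \<inter> convex hull (X - {c'}))"
        using triangulation_inter[OF finX uniq, of c c'] low[of c c']
        by (auto simp: P_def intro: negligible_subset)
    qed
  qed
  also have "\<dots> = (\<Sum>c\<in>P. measure lborel (convex hull (X - {c})))"
    by (rule sum.cong[OF refl], rule lborel_lebesgue_compact[symmetric, OF comp]) auto
  finally show ?thesis by (simp add: P_def)
qed


lemma negligible_small_hull:
  fixes S :: "'a::euclidean_space set"
  assumes "finite S" "card S \<le> DIM('a)"
  shows "negligible (convex hull S)"
proof -
  have "aff_dim (convex hull S) = aff_dim S" by (rule aff_dim_convex_hull)
  also have "\<dots> \<le> int (card S) - 1" using aff_dim_le_card[OF assms(1)] by simp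
  also have "\<dots> < int DIM('a)" using assms(2) by simp
  finally obtain a b where "a \<noteq> 0" "convex hull S \<subseteq> {x. a \<bullet> x = b}"
    using aff_lowdim_subset_hyperplane by blast
  then show ?thesis using negligible_hyperplane negligible_subset by blast
qed

lemma card_odd_below: "card {k\<in>{..<m}. odd k} = m div 2"
proof (induction m)
  case 0 then show ?case by simp
next
  case (Suc m)
  have "{k\<in>{..<Suc m}. odd k} = (if odd m then insert m {k\<in>{..<m}. odd k} else {k\<in>{..<m}. odd k})"
    by (auto simp: less_Suc_eq)
  then show ?case using Suc by (auto)
qed

lemma card_even_below: "card {k\<in>{..<m}. even k} = m - m div 2"
proof -
  have "{k\<in>{..<m}. even k} = {..<m} - {k\<in>{..<m}. odd k}" by auto
  then have "card {k\<in>{..<m}. even k} = card ({..<m} - {k\<in>{..<m}. odd k})" by simp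
  also have "\<dots> = m - card {k\<in>{..<m}. odd k}"
    by (subst card_Diff_subset) auto
  finally have "card {k\<in>{..<m}. even k} = m - card {k\<in>{..<m}. odd k}" .
  then show ?thesis using card_odd_below[of m] by simp
qed

lemma sum_alt2: "(\<Sum>k<(m::nat). (if even k then 2 else -2 :: real)) = (if even m then 0 else 2)"
  by (induction m) auto

lemma sum_Basis_vec: "(\<Sum>b\<in>(Basis :: (real^'n) set). g b) = (\<Sum>i\<in>UNIV. g (axis i 1))"
proof -
  have "inj (\<lambda>i::'n. axis i (1::real))" by (auto intro!: injI simp: axis_eq_axis)
  then show ?thesis unfolding Basis_vec_range by (simp add: sum.reindex)
qed

lemma sum_axis_comp: "(\<Sum>i\<in>UNIV. (a i) *\<^sub>R (axis i 1 :: real^'n)) $ k = a k"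
proof -
  have "(\<Sum>i\<in>UNIV. (a i) *\<^sub>R (axis i 1 :: real^'n)) $ k = (\<Sum>i\<in>UNIV. a i * (axis i 1 :: real^'n) $ k)"
    by (simp add: sum_component)
  also have "\<dots> = (\<Sum>i\<in>UNIV. if i = k then a k else 0)"
    by (rule sum.cong) (auto simp: axis_def)
  finally show ?thesis by simp
qed

locale cfg =
  fixes par :: "'n::finite \<Rightarrow> nat"
  assumes bij: "bij_betw par UNIV {..<CARD('n)}"
begin


definition qr :: "real^'n" where "qr = (\<chi> i. if even (par i) then 2 else -2)"
definition qi :: "int^'n" where "qi = (\<chi> i. if even (par i) then 2 else -2)"
definition XX :: "(real^'n) set" where "XX = insert 0 (insert qr Basis)"
definition Cint :: "(int^'n) set" where "Cint = insert 0 (insert qi (range (\<lambda>i. axis i 1)))"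
definition lam0 :: "real^'n \<Rightarrow> real" where
  "lam0 y = (if y = qr then 1 else if y = 0 then (\<Sum>i\<in>UNIV. qr$i) - 1 else - (qr \<bullet> y))"

lemma sum_par: "(\<Sum>i\<in>UNIV. g (par i)) = (\<Sum>k<CARD('n). g k)"
  by (rule sum.reindex_bij_betw[OF bij])

lemma prod_par: "(\<Prod>i\<in>UNIV. g (par i)) = (\<Prod>k<CARD('n). g k)"
  by (rule prod.reindex_bij_betw[OF bij])

lemma card_par: "card {i. P (par i)} = card {k\<in>{..<CARD('n)}. P k}"
proof -
  have "bij_betw par {i. P (par i)} {k\<in>{..<CARD('n)}. P k}"
    using bij unfolding bij_betw_def inj_on_def by auto
  then show ?thesis by (rule bij_betw_same_card)
qed

lemma qr_comp: "qr $ i = (if even (par i) then 2 else -2)" by (simp add: qr_def)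

lemma qr_ne0: "qr $ i \<noteq> 0" by (simp add: qr_def)

lemma sum_qr: "(\<Sum>i\<in>UNIV. qr$i) = (if even CARD('n) then 0 else 2)"
  using sum_par[of "\<lambda>k. if even k then 2 else -2 :: real"] sum_alt2[of "CARD('n)"] by (simp add: qr_def)

lemma qr_notin: "qr \<notin> Basis"
proof
  assume "qr \<in> Basis"
  then obtain i where "qr = axis i 1" by (auto simp: Basis_vec_range)
  then have "qr $ i = 1" by simp
  then show False by (simp add: qr_def split: if_splits)
qed

lemma qr_nz: "qr \<noteq> 0"
  using qr_ne0 by (metis zero_index)

lemma zero_notin: "(0::real^'n) \<notin> Basis"
  using zero_not_in_Basis by blast

lemma finXX: "finite XX" by (simp add: XX_def)

lemma cardXX: "card XX = CARD('n) + 2"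
  using qr_notin qr_nz zero_notin by (simp add: XX_def)

lemma axis_ne_qr: "axis i 1 \<noteq> qr"
proof
  assume "axis i 1 = qr"
  moreover have "axis i (1::real) \<in> Basis" by (auto simp: Basis_vec_range)
  ultimately show False using qr_notin by simp
qed

lemma lam0_axis: "lam0 (axis i 1) = - qr $ i"
proof -
  have "axis i (1::real) \<in> Basis" by (auto simp: Basis_vec_range)
  have "axis i 1 \<noteq> qr"
  proof
    assume "axis i 1 = qr"
    with \<open>axis i (1::real) \<in> Basis\<close> qr_notin show False by simp
  qed
  moreover have "axis i (1::real) \<noteq> 0" by (simp add: axis_eq_0_iff)
  ultimately show ?thesis by (simp add: lam0_def inner_axis)
qed

lemma lam0_0: "lam0 0 = (if even CARD('n) then -1 else 1)"
  using qr_nz by (simp add: lam0_def sum_qr)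

lemma lam0_qr: "lam0 qr = 1" by (simp add: lam0_def)

lemma sum_XX: "(\<Sum>x\<in>XX. f x) = f 0 + f qr + (\<Sum>i\<in>UNIV. f (axis i 1))"
  using qr_notin qr_nz zero_notin by (simp add: XX_def sum_Basis_vec add.assoc)

lemma lam0_sum: "sum lam0 XX = 0"
  by (simp add: sum_XX lam0_axis lam0_0 lam0_qr sum_negf sum_qr)

lemma lam0_vec: "(\<Sum>x\<in>XX. lam0 x *\<^sub>R x) = 0"
proof -
  have "(\<Sum>x\<in>XX. lam0 x *\<^sub>R x) = qr + (\<Sum>i\<in>UNIV. (- qr$i) *\<^sub>R axis i 1)"
    by (simp add: sum_XX lam0_axis lam0_qr)
  also have "\<dots> = 0"
  proof -
    have "(\<Sum>i\<in>UNIV. (- qr$i) *\<^sub>R (axis i 1::real^'n)) $ k = - qr $ k" for k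
      by (rule sum_axis_comp)
    then show ?thesis by (simp add: vec_eq_iff)
  qed
  finally show ?thesis .
qed

lemma uniq:
  assumes "sum u XX = 0" "(\<Sum>x\<in>XX. u x *\<^sub>R x) = 0"
  shows "\<forall>x\<in>XX. u x = u qr * lam0 x"
proof -
  have comp: "u qr * qr $ k + u (axis k 1) = 0" for k
  proof -
    have "(\<Sum>x\<in>XX. u x *\<^sub>R x) = u 0 *\<^sub>R 0 + u qr *\<^sub>R qr + (\<Sum>i\<in>UNIV. u (axis i 1) *\<^sub>R axis i 1)"
      by (rule sum_XX)
    then have "0 = (u qr *\<^sub>R qr + (\<Sum>i\<in>UNIV. u (axis i 1) *\<^sub>R (axis i 1::real^'n))) $ k"
      using assms(2) by simp
    also have "\<dots> = u qr * qr $ k + (\<Sum>i\<in>UNIV. u (axis i 1) *\<^sub>R (axis i 1::real^'n)) $ k"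
      by simp
    also have "(\<Sum>i\<in>UNIV. u (axis i 1) *\<^sub>R (axis i 1::real^'n)) $ k = u (axis k 1)"
      by (rule sum_axis_comp)
    finally show ?thesis by simp
  qed
  have ax: "u (axis k 1) = u qr * lam0 (axis k 1)" for k
    using comp[of k] by (simp add: lam0_axis)
  have "u 0 + u qr + (\<Sum>i\<in>UNIV. u (axis i 1)) = 0" using assms(1) by (simp add: sum_XX)
  moreover have "(\<Sum>i\<in>UNIV. u (axis i 1)) = (\<Sum>i\<in>UNIV. - u qr * qr $ i)"
  proof (rule sum.cong[OF refl])
    fix i show "u (axis i 1) = - u qr * qr $ i" using comp[of i] by linarith
  qed
  ultimately have "u 0 = - u qr - (\<Sum>i\<in>UNIV. - u qr * qr $ i)" by linarith
  also have "\<dots> = u qr * ((\<Sum>i\<in>UNIV. qr$i) - 1)"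
    by (simp add: sum_negf sum_distrib_left algebra_simps)
  finally have z: "u 0 = u qr * lam0 0" using qr_nz by (simp add: lam0_def)
  show ?thesis
    using ax z by (auto simp: XX_def Basis_vec_range lam0_qr)
qed

lemma lam0_nz: "x \<in> XX \<Longrightarrow> lam0 x \<noteq> 0"
  by (auto simp: XX_def Basis_vec_range lam0_axis lam0_0 lam0_qr qr_ne0 split: if_splits)


lemma ex_par0: "\<exists>i. par i = 0"
proof -
  have "0 \<in> {..<CARD('n)}" by simp
  then have "0 \<in> range par" using bij by (simp add: bij_betw_def)
  then show ?thesis by (metis imageE)
qed

definition sgnn :: real where "sgnn = (if even CARD('n) then 1 else -1)"
definition lamS :: "real^'n \<Rightarrow> real" where "lamS x = sgnn * lam0 x"

lemma XX_minus_axis: "XX - {axis i 1} = insert 0 (insert qr (Basis - {axis i 1}))"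
proof -
  have "axis i 1 \<noteq> qr" "axis i (1::real) \<noteq> 0" using axis_ne_qr by (auto simp: axis_eq_0_iff)
  then show ?thesis by (auto simp: XX_def)
qed

lemma XX_minus_qr: "XX - {qr} = insert 0 Basis"
  using qr_notin qr_nz by (auto simp: XX_def)

lemma m_axis: "measure lborel (convex hull (XX - {axis i 1})) = 2 / fact CARD('n)"
  using simplex_measure[of qr i] qr_ne0[of i] by (simp add: XX_minus_axis qr_comp)

lemma m_qr: "measure lborel (convex hull (XX - {qr})) = 1 / fact CARD('n)"
  using content_std_simplex[where 'a="real^'n"] by (simp add: XX_minus_qr)

lemma sum_axis_image:
  "(\<Sum>c\<in>(\<lambda>i. axis i 1) ` {i. P (par i)}. measure lborel (convex hull (XX - {c})))
     = 2 * card {k\<in>{..<CARD('n)}. P k} / fact CARD('n)"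
proof -
  have inj: "inj_on (\<lambda>i::'n. axis i (1::real)) {i. P (par i)}" by (auto intro!: inj_onI simp: axis_eq_axis)
  have "(\<Sum>c\<in>(\<lambda>i. axis i 1) ` {i. P (par i)}. measure lborel (convex hull (XX - {c})))
        = (\<Sum>i\<in>{i. P (par i)}. 2 / fact CARD('n))"
    by (simp add: sum.reindex[OF inj] m_axis)
  also have "\<dots> = 2 * card {k\<in>{..<CARD('n)}. P k} / fact CARD('n)"
    using card_par[of P] by simp
  finally show ?thesis .
qed

lemma lamS_0: "lamS 0 = -1" by (simp add: lamS_def sgnn_def lam0_0)
lemma lamS_qr: "lamS qr = sgnn" by (simp add: lamS_def lam0_qr)
lemma lamS_axis: "lamS (axis i 1) = - sgnn * qr $ i" by (simp add: lamS_def lam0_axis)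

lemma XX_cases:
  assumes "x \<in> XX"
  obtains "x = 0" | "x = qr" | i where "x = axis i 1"
  using assms by (auto simp: XX_def Basis_vec_range)

lemma axis_in_XX: "axis i 1 \<in> XX" by (simp add: XX_def Basis_vec_range)

lemma P_even:
  assumes ev: "even CARD('n)"
  shows "{c\<in>XX. lamS c > 0} = insert qr ((\<lambda>i. axis i 1) ` {i. odd (par i)})"
proof -
  have sg: "sgnn = 1" using ev by (simp add: sgnn_def)
  show ?thesis
  proof (intro set_eqI iffI)
    fix x assume "x \<in> {c\<in>XX. lamS c > 0}"
    then have x: "x \<in> XX" "lamS x > 0" by auto
    from x(1) show "x \<in> insert qr ((\<lambda>i. axis i 1) ` {i. odd (par i)})"
    proof (cases rule: XX_cases)
      case 1 then show ?thesis using x(2) by (simp add: lamS_0)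
    next
      case 2 then show ?thesis by simp
    next
      case (3 i)
      then have "odd (par i)" using x(2) sg by (simp add: lamS_axis qr_comp split: if_splits)
      then show ?thesis using 3 by blast
    qed
  next
    fix x :: "real^'n" assume "x \<in> insert qr ((\<lambda>i. axis i 1) ` {i. odd (par i)})"
    then consider "x = qr" | i where "x = axis i 1" "odd (par i)" by blast
    then show "x \<in> {c\<in>XX. lamS c > 0}"
    proof cases
      case 1 then show ?thesis using sg by (simp add: lamS_qr XX_def)
    next
      case 2 then show ?thesis using sg axis_in_XX by (simp add: lamS_axis qr_comp)
    qed
  qed
qed

lemma P_odd:
  assumes od: "odd CARD('n)"
  shows "{c\<in>XX. lamS c > 0} = (\<lambda>i. axis i 1) ` {i. even (par i)}"
proof -
  have sg: "sgnn = -1" using od by (simp add: sgnn_def)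
  show ?thesis
  proof (intro set_eqI iffI)
    fix x assume "x \<in> {c\<in>XX. lamS c > 0}"
    then have x: "x \<in> XX" "lamS x > 0" by auto
    from x(1) show "x \<in> (\<lambda>i. axis i 1) ` {i. even (par i)}"
    proof (cases rule: XX_cases)
      case 1 then show ?thesis using x(2) by (simp add: lamS_0)
    next
      case 2 then show ?thesis using x(2) sg by (simp add: lamS_qr)
    next
      case (3 i)
      then have "even (par i)" using x(2) sg by (simp add: lamS_axis qr_comp split: if_splits)
      then show ?thesis using 3 by blast
    qed
  next
    fix x :: "real^'n" assume "x \<in> (\<lambda>i. axis i 1) ` {i. even (par i)}"
    then obtain i where "x = axis i 1" "even (par i)" by blast
    then show "x \<in> {c\<in>XX. lamS c > 0}" using sg axis_in_XX by (simp add: lamS_axis qr_comp)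
  qed
qed

lemma volume_tri:
  "measure lborel (convex hull XX) = (\<Sum>c\<in>{c\<in>XX. lamS c > 0}. measure lborel (convex hull (XX - {c})))"
proof (rule triangulation_measure[OF finXX])
  have s2: "sgnn * sgnn = 1" by (simp add: sgnn_def)
  show "sum lamS XX = 0" unfolding lamS_def by (simp add: sum_distrib_left[symmetric] lam0_sum)
  show "(\<Sum>x\<in>XX. lamS x *\<^sub>R x) = 0"
  proof -
    have "(\<Sum>x\<in>XX. lamS x *\<^sub>R x) = sgnn *\<^sub>R (\<Sum>x\<in>XX. lam0 x *\<^sub>R x)"
      unfolding lamS_def scaleR_sum_right by (rule sum.cong) auto
    then show ?thesis using lam0_vec by simp
  qed
  show "\<exists>s. \<forall>x\<in>XX. u x = s * lamS x" if "sum u XX = 0" "(\<Sum>x\<in>XX. u x *\<^sub>R x) = 0" for u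
  proof (intro exI[of _ "u qr * sgnn"] ballI)
    fix x assume "x \<in> XX"
    then have "u x = u qr * lam0 x" using uniq[OF that] by blast
    also have "\<dots> = u qr * (sgnn * sgnn) * lam0 x" using s2 by simp
    finally show "u x = u qr * sgnn * lamS x" by (simp add: lamS_def mult.assoc)
  qed
  show "negligible (convex hull (XX - {c, c'}))" if "c \<in> XX" "c' \<in> XX" "c \<noteq> c'" for c c'
  proof (rule negligible_small_hull)
    show "finite (XX - {c, c'})" using finXX by simp
    have "card (XX - {c, c'}) = card XX - card {c, c'}"
      using that finXX by (intro card_Diff_subset) auto
    also have "\<dots> = CARD('n)" using cardXX that by simp
    finally show "card (XX - {c, c'}) \<le> DIM(real^'n)" by simp
  qed
  show "\<exists>c\<in>XX. lamS c > 0"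
  proof (cases "even CARD('n)")
    case True
    then have "qr \<in> {c\<in>XX. lamS c > 0}" using P_even by blast
    then show ?thesis by blast
  next
    case False
    obtain i where "par i = 0" using ex_par0 by blast
    then have "axis i 1 \<in> {c\<in>XX. lamS c > 0}" using P_odd[OF False] by auto
    then show ?thesis by blast
  qed
qed

lemma volume: "measure lborel (convex hull XX) = (CARD('n) + 1) / fact CARD('n)"
proof (cases "even CARD('n)")
  case True
  have nin: "qr \<notin> (\<lambda>i. axis i 1) ` {i. odd (par i)}"
  proof
    assume "qr \<in> (\<lambda>i. axis i 1) ` {i. odd (par i)}"
    then obtain i where "qr = axis i 1" by blast
    with axis_ne_qr[of i] show False by simp
  qed
  have "measure lborel (convex hull XX)
        = 1 / fact CARD('n) + 2 * card {k\<in>{..<CARD('n)}. odd k} / fact CARD('n)"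
  proof -
    have fin: "finite ((\<lambda>i. axis i (1::real)) ` {i::'n. odd (par i)})" by simp
    show ?thesis
      unfolding volume_tri P_even[OF True] sum.insert[OF fin nin] m_qr sum_axis_image[of odd] by simp
  qed
  also have "card {k\<in>{..<CARD('n)}. odd k} = CARD('n) div 2" by (rule card_odd_below)
  also have "2 * (CARD('n) div 2) = CARD('n)" using True by simp
  finally show ?thesis by (simp add: add_divide_distrib)
next
  case False
  have "measure lborel (convex hull XX) = 2 * card {k\<in>{..<CARD('n)}. even k} / fact CARD('n)"
    unfolding volume_tri P_odd[OF False] sum_axis_image[of even] by simp
  also have "card {k\<in>{..<CARD('n)}. even k} = CARD('n) - CARD('n) div 2" by (rule card_even_below)
  also have "2 * (CARD('n) - CARD('n) div 2) = CARD('n) + 1" using False by presburger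
  finally show ?thesis by simp
qed

lemma nondeg: "S \<subset> XX \<Longrightarrow> \<not> affine_dependent S"
proof
  assume SX: "S \<subset> XX" and dep: "affine_dependent S"
  have finS: "finite S" using SX finXX finite_subset by auto
  obtain c where c: "c \<in> XX" "c \<notin> S" using SX by blast
  obtain U where U: "sum U S = 0" "\<exists>v\<in>S. U v \<noteq> 0" "(\<Sum>v\<in>S. U v *\<^sub>R v) = 0"
    using dep affine_dependent_explicit_finite[OF finS] by blast
  define u where "u x = (if x \<in> S then U x else 0)" for x
  have "sum u XX = sum U S"
    using SX finXX by (simp add: u_def sum.If_cases Int_absorb1 less_imp_le)
  moreover have "(\<Sum>x\<in>XX. u x *\<^sub>R x) = (\<Sum>v\<in>S. U v *\<^sub>R v)"
  proof -
    have "(\<Sum>x\<in>XX. u x *\<^sub>R x) = (\<Sum>x\<in>XX. if x \<in> S then U x *\<^sub>R x else 0)"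
      by (rule sum.cong) (auto simp: u_def)
    also have "\<dots> = (\<Sum>v\<in>S. U v *\<^sub>R v)"
      using SX finXX by (simp add: sum.If_cases Int_absorb1 less_imp_le)
    finally show ?thesis .
  qed
  ultimately have all: "\<forall>x\<in>XX. u x = u qr * lam0 x" using uniq U by simp
  have "u c = 0" using c by (simp add: u_def)
  then have "u qr = 0" using all c lam0_nz[OF c(1)] by simp
  then have "\<forall>x\<in>XX. u x = 0" using all by simp
  moreover obtain v where v: "v \<in> S" "U v \<noteq> 0" using U(2) by blast
  moreover have "v \<in> XX" using v SX by blast
  ultimately have "u v = 0" by blast
  then show False using v by (simp add: u_def)
qed

lemma affine_hull_XX: "affine hull XX = UNIV"
proof -
  have "0 \<in> affine hull XX" by (simp add: XX_def hull_inc)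
  then have "affine hull XX = span XX" by (rule affine_hull_span_0)
  moreover have "span (Basis :: (real^'n) set) \<subseteq> span XX" by (rule span_mono) (auto simp: XX_def)
  ultimately show ?thesis by (auto simp: span_Basis)
qed

lemma real_pt_axis: "real_pt (axis i 1 :: int^'n) = axis i 1"
  by (simp add: real_pt_def vec_eq_iff axis_def)

lemma real_pt_0: "real_pt (0 :: int^'n) = 0"
  by (simp add: real_pt_def vec_eq_iff)

lemma real_pt_qi: "real_pt qi = qr"
  by (simp add: real_pt_def vec_eq_iff qi_def qr_def)

lemma inj_real_pt: "inj (real_pt :: int^'n \<Rightarrow> real^'n)"
proof (rule injI)
  fix a b :: "int^'n" assume "real_pt a = real_pt b"
  then have "\<forall>i. real_of_int (a $ i) = real_of_int (b $ i)" by (simp add: real_pt_def vec_eq_iff)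
  then show "a = b" by (simp add: vec_eq_iff)
qed

lemma real_pt_Cint: "real_pt ` Cint = XX"
  by (simp add: Cint_def XX_def real_pt_0 real_pt_qi image_image real_pt_axis Basis_vec_range)

lemma card_Cint: "card Cint = CARD('n) + 2"
proof -
  have "card (real_pt ` Cint) = card Cint" using inj_real_pt by (simp add: card_image inj_on_subset)
  then show ?thesis using real_pt_Cint cardXX by simp
qed

lemma finite_Cint: "finite Cint" by (simp add: Cint_def)

lemma nondegenerate_Cint: "nondegenerate_circuit Cint"
  unfolding nondegenerate_circuit_def is_circuit_def
  using finite_Cint card_Cint real_pt_Cint affine_hull_XX nondeg by simp

lemma normalized_volume_Cint: "normalized_volume Cint = CARD('n) + 1"
  unfolding normalized_volume_def real_pt_Cint volume by simp

end


context cfg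
begin

definition MM :: real where "MM = 2 ^ (CARD('n) + 1)"
definition cc :: "nat \<Rightarrow> real" where "cc k = 1 / MM ^ (4 * k + 2)"

lemma MM_ge: "MM \<ge> 2" by (simp add: MM_def)
lemma cc_pos: "cc k > 0" using MM_ge by (simp add: cc_def)

definition gg :: "'n \<Rightarrow> int^'n \<Rightarrow> real" where
  "gg j a = (if a = axis j 1 then 1 else 0) - (if a = 0 then 1 else 0) - (if a = qi then cc (par j) else 0)"

definition cF :: "'n \<Rightarrow> int^'n \<Rightarrow> real" where
  "cF j a = gg j a + (\<Sum>k\<in>UNIV. gg k a)"

lemma qi_ne0: "qi \<noteq> 0"
proof
  assume "qi = 0"
  then have "qi $ (undefined::'n) = 0" by simp
  then show False by (simp add: qi_def split: if_splits)
qed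

lemma qi_ne_axis: "qi \<noteq> axis k 1"
proof
  assume "qi = axis k 1"
  then have "qi $ k = 1" by simp
  then show False by (simp add: qi_def split: if_splits)
qed

lemma axis_ne0: "axis k 1 \<noteq> (0::int^'n)" by (simp add: axis_eq_0_iff)

lemma gg_0: "gg j 0 = -1"
proof -
  have "(0::int^'n) \<noteq> axis j 1" using axis_ne0[of j] by (rule not_sym)
  moreover have "(0::int^'n) \<noteq> qi" using qi_ne0 by (rule not_sym)
  ultimately show ?thesis by (simp add: gg_def)
qed

lemma gg_qi: "gg j qi = - cc (par j)"
  using qi_ne0 qi_ne_axis by (simp add: gg_def)

lemma gg_axis: "gg j (axis i 1) = (if i = j then 1 else 0)"
  using qi_ne_axis[of i] axis_ne0[of i] by (simp add: gg_def axis_eq_axis)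

lemma sum_Cint: "(\<Sum>a\<in>Cint. f a) = f 0 + f qi + (\<Sum>i\<in>UNIV. f (axis i 1))"
proof -
  have inj: "inj (\<lambda>i::'n. axis i (1::int))" by (auto intro!: injI simp: axis_eq_axis)
  have n1: "qi \<notin> range (\<lambda>i. axis i 1)" using qi_ne_axis by auto
  have n2: "(0::int^'n) \<notin> range (\<lambda>i. axis i 1)" using axis_ne0 by (metis rangeE)
  show ?thesis using n1 n2 qi_ne0 inj
    by (simp add: Cint_def sum.reindex add.assoc)
qed

lemma supported: "supported_on cF Cint"
  unfolding supported_on_def
proof (intro allI impI)
  fix j a assume "a \<in> Cint"
  then consider "a = 0" | "a = qi" | i where "a = axis i 1" by (auto simp: Cint_def)
  then show "cF j a \<noteq> 0"
  proof cases
    case 1 then show ?thesis by (simp add: cF_def gg_0)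
  next
    case 2
    have "(\<Sum>k\<in>UNIV. cc (par k)) \<ge> 0" by (intro sum_nonneg) (simp add: less_imp_le cc_pos)
    then show ?thesis using 2 cc_pos[of "par j"] by (simp add: cF_def gg_qi sum_negf)
  next
    case 3
    have "(\<Sum>k\<in>UNIV. gg k (axis i 1)) = 1" by (simp add: gg_axis)
    then show ?thesis using 3 by (simp add: cF_def gg_axis)
  qed
qed

lemma mono_axis: "laurent_monomial (x::'a::real_field^'n) (axis j 1) = x $ j"
proof -
  have "laurent_monomial x (axis j 1) = (\<Prod>i\<in>UNIV. if i = j then x $ i else 1)"
    unfolding laurent_monomial_def by (rule prod.cong) (auto simp: axis_def)
  then show ?thesis by simp
qed

lemma mono_0: "laurent_monomial (x::'a::real_field^'n) 0 = 1"
  by (simp add: laurent_monomial_def)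

definition GG :: "'n \<Rightarrow> 'a::real_field^'n \<Rightarrow> 'a" where
  "GG j x = x $ j - 1 - of_real (cc (par j)) * laurent_monomial x qi"

lemma sum_gg: "(\<Sum>a\<in>Cint. of_real (gg j a) * laurent_monomial (x::'a::real_field^'n) a) = GG j x"
proof -
  have "(\<Sum>i\<in>UNIV. of_real (gg j (axis i 1)) * laurent_monomial x (axis i 1))
        = (\<Sum>i\<in>UNIV. if i = j then x $ i else 0)"
    by (rule sum.cong) (auto simp: gg_axis mono_axis)
  then show ?thesis
    by (simp add: sum_Cint gg_0 gg_qi mono_0 GG_def algebra_simps)
qed

lemma eval_cF: "laurent_eval cF Cint j (x::'a::real_field^'n) = GG j x + (\<Sum>k\<in>UNIV. GG k x)"
proof -
  have "laurent_eval cF Cint j x = (\<Sum>a\<in>Cint. of_real (gg j a) * laurent_monomial x a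
          + (\<Sum>k\<in>UNIV. of_real (gg k a) * laurent_monomial x a))"
    unfolding laurent_eval_def
  proof (rule sum.cong[OF refl])
    fix a
    have "of_real (cF j a) = (of_real (gg j a) + (\<Sum>k\<in>UNIV. of_real (gg k a)) :: 'a)"
      by (simp add: cF_def)
    then show "of_real (cF j a) * laurent_monomial x a = of_real (gg j a) * laurent_monomial x a
          + (\<Sum>k\<in>UNIV. of_real (gg k a) * laurent_monomial x a)"
      by (simp add: distrib_right sum_distrib_right)
  qed
  also have "\<dots> = (\<Sum>a\<in>Cint. of_real (gg j a) * laurent_monomial x a)
          + (\<Sum>a\<in>Cint. \<Sum>k\<in>UNIV. of_real (gg k a) * laurent_monomial x a)"
    by (rule sum.distrib)
  also have "(\<Sum>a\<in>Cint. \<Sum>k\<in>UNIV. of_real (gg k a) * laurent_monomial x a)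
           = (\<Sum>k\<in>UNIV. \<Sum>a\<in>Cint. of_real (gg k a) * laurent_monomial x a)"
    by (rule sum.swap)
  finally show ?thesis by (simp only: sum_gg)
qed

lemma eval_iff: "(\<forall>j. laurent_eval cF Cint j (x::'a::real_field^'n) = 0) \<longleftrightarrow> (\<forall>j. GG j x = 0)"
proof
  assume H: "\<forall>j. laurent_eval cF Cint j x = 0"
  define S where "S = (\<Sum>k\<in>UNIV. GG k x)"
  have Gj: "GG j x = - S" for j using H[rule_format, of j] by (simp add: eval_cF S_def add_eq_0_iff)
  have "S = (\<Sum>k\<in>UNIV. GG k x)" by (simp add: S_def)
  also have "\<dots> = (\<Sum>k\<in>(UNIV::'n set). - S)" using Gj by simp
  finally have "S = (\<Sum>k\<in>(UNIV::'n set). - S)" .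
  then have "S = - of_nat CARD('n) * S" by simp
  then have "S + of_nat CARD('n) * S = - of_nat CARD('n) * S + of_nat CARD('n) * S"
    by (rule arg_cong[where f="\<lambda>y. y + of_nat CARD('n) * S"])
  then have "(1 + of_nat CARD('n)) * S = 0" by (simp add: distrib_right)
  moreover have "(1 + of_nat CARD('n) :: 'a) \<noteq> 0"
  proof -
    have "(of_nat (Suc CARD('n)) :: 'a) \<noteq> 0" by (simp only: of_nat_eq_0_iff nat.distinct not_False_eq_True)
    then show ?thesis by simp
  qed
  ultimately have "S = 0" by simp
  then show "\<forall>j. GG j x = 0" using Gj by simp
qed (simp add: eval_cF)

end


context cfg
begin

definition fk :: "nat \<Rightarrow> 'a::real_field \<Rightarrow> 'a" where "fk k t = 1 + of_real (cc k) * t"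
definition Ev :: "'a::real_field \<Rightarrow> 'a" where
  "Ev t = (\<Prod>k<CARD('n). if even k then (fk k t)^2 else 1)"
definition Od :: "'a::real_field \<Rightarrow> 'a" where
  "Od t = (\<Prod>k<CARD('n). if even k then 1 else (fk k t)^2)"
definition Qf :: "'a::real_field \<Rightarrow> 'a" where "Qf t = t * Od t - Ev t"
definition Xv :: "'a::real_field \<Rightarrow> 'a^'n" where "Xv t = (\<chi> i. fk (par i) t)"

lemma par_surj: "k < CARD('n) \<Longrightarrow> \<exists>i. par i = k"
proof -
  assume "k < CARD('n)"
  then have "k \<in> par ` UNIV" using bij by (simp add: bij_betw_def)
  then show ?thesis by blast
qed

lemma Od_nz: "(\<forall>k<CARD('n). fk k t \<noteq> 0) \<Longrightarrow> Od (t::'a::real_field) \<noteq> 0"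
  by (simp add: Od_def)

lemma mono_Xv:
  assumes nz: "\<forall>k<CARD('n). fk k t \<noteq> 0"
  shows "laurent_monomial (Xv (t::'a::real_field)) qi = Ev t / Od t"
proof -
  define h where "h k = (fk k t) powi (if even k then 2 else -2)" for k
  have "laurent_monomial (Xv t) qi = (\<Prod>i\<in>UNIV. h (par i))"
    unfolding laurent_monomial_def by (rule prod.cong) (simp_all add: Xv_def qi_def h_def)
  also have "\<dots> = (\<Prod>k<CARD('n). h k)" by (rule prod_par)
  also have "\<dots> = (\<Prod>k<CARD('n). (if even k then (fk k t)^2 else 1) / (if even k then 1 else (fk k t)^2))"
  proof (rule prod.cong[OF refl])
    fix k assume "k \<in> {..<CARD('n)}"
    show "h k = (if even k then (fk k t)^2 else 1) / (if even k then 1 else (fk k t)^2)"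
      by (simp add: h_def power_int_minus divide_inverse)
  qed
  also have "\<dots> = Ev t / Od t" unfolding Ev_def Od_def by (rule prod_dividef)
  finally show ?thesis .
qed

lemma GG_Xv: "GG j (Xv t) = fk (par j) t - 1 - of_real (cc (par j)) * laurent_monomial (Xv (t::'a::real_field)) qi"
  by (simp add: GG_def Xv_def)

lemma sol_char:
  fixes x :: "'a::real_field^'n"
  assumes nzx: "\<forall>i. x$i \<noteq> 0"
  shows "(\<forall>j. laurent_eval cF Cint j x = 0) \<longleftrightarrow> (\<exists>t. x = Xv t \<and> Qf t = 0 \<and> (\<forall>k<CARD('n). fk k t \<noteq> 0))"
proof
  assume "\<forall>j. laurent_eval cF Cint j x = 0"
  then have G: "\<forall>j. GG j x = 0" using eval_iff by blast
  define t where "t = laurent_monomial x qi"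
  have xe: "x = Xv t"
  proof -
    have "x $ j = fk (par j) t" for j
    proof -
      have "x $ j - 1 - of_real (cc (par j)) * t = 0"
        using G[rule_format, of j] unfolding GG_def t_def .
      then show ?thesis unfolding fk_def by (simp add: algebra_simps)
    qed
    then show ?thesis by (simp add: vec_eq_iff Xv_def)
  qed
  have nz: "\<forall>k<CARD('n). fk k t \<noteq> 0"
  proof (intro allI impI)
    fix k assume "k < CARD('n)"
    then obtain i where "par i = k" using par_surj by blast
    then have "fk k t = x $ i" using xe by (simp add: Xv_def)
    then show "fk k t \<noteq> 0" using nzx by simp
  qed
  have "t = laurent_monomial (Xv t) qi" using xe t_def by simp
  then have "t = Ev t / Od t" using mono_Xv[OF nz] by simp
  then have "t * Od t = Ev t" using Od_nz[OF nz] by (simp add: field_simps)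
  then have "Qf t = 0" by (simp add: Qf_def)
  then show "\<exists>t. x = Xv t \<and> Qf t = 0 \<and> (\<forall>k<CARD('n). fk k t \<noteq> 0)" using xe nz by blast
next
  assume "\<exists>t. x = Xv t \<and> Qf t = 0 \<and> (\<forall>k<CARD('n). fk k t \<noteq> 0)"
  then obtain t where xe: "x = Xv t" and q: "Qf t = 0" and nz: "\<forall>k<CARD('n). fk k t \<noteq> 0" by blast
  have "Ev t = t * Od t" using q by (simp add: Qf_def)
  then have m: "laurent_monomial x qi = t" using mono_Xv[OF nz] Od_nz[OF nz] xe by simp
  have "GG j x = 0" for j using m xe by (simp add: GG_def Xv_def fk_def)
  then show "\<forall>j. laurent_eval cF Cint j x = 0" using eval_iff by blast
qed

end


definition sgk :: "nat \<Rightarrow> real" where "sgk k = (if even k then 1 else -1)"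

lemma sumB: "(\<Sum>k<j. sgk k) = (if even j then 0 else 1)"
  by (induction j) (auto simp: sgk_def)

lemma sumA: "real (2 * j + 1) - 4 * (\<Sum>k<j. sgk k * (real j - real k)) = sgk j"
proof (induction j)
  case 0 then show ?case by (simp add: sgk_def)
next
  case (Suc j)
  have "(\<Sum>k<Suc j. sgk k * (real (Suc j) - real k))
        = (\<Sum>k<j. sgk k * (real j - real k)) + (\<Sum>k<j. sgk k) + sgk j"
  proof -
    have "(\<Sum>k<j. sgk k * (real (Suc j) - real k)) = (\<Sum>k<j. sgk k * (real j - real k) + sgk k)"
      by (rule sum.cong) (simp_all add: algebra_simps)
    then show ?thesis by (simp add: sum.distrib)
  qed
  then show ?case using Suc.IH sumB[of j] by (auto simp: sgk_def algebra_simps)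
qed

context cfg
begin

definition fr :: "nat \<Rightarrow> real \<Rightarrow> real" where "fr k w = 1 + cc k * w^2"
definition Pe :: "real \<Rightarrow> real" where "Pe w = (\<Prod>k<CARD('n). if even k then fr k w else 1)"
definition Po :: "real \<Rightarrow> real" where "Po w = (\<Prod>k<CARD('n). if even k then 1 else fr k w)"
definition HH :: "real \<Rightarrow> real" where "HH w = w * Po w - Pe w"

lemma fr_pos: "fr k w > 0"
  using cc_pos[of k] by (simp add: fr_def add_pos_nonneg)

lemma fr_ge1: "fr k w \<ge> 1"
  using cc_pos[of k] by (simp add: fr_def)

lemma Pe_pos: "Pe w > 0" by (simp add: Pe_def prod_pos fr_pos)
lemma Po_pos: "Po w > 0" by (simp add: Po_def prod_pos fr_pos)

lemma Qf_sq: "Qf (w^2 :: real) = (w * Po w)^2 - (Pe w)^2"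
proof -
  have e: "Ev (w^2) = (Pe w)^2"
    unfolding Ev_def Pe_def prod_power_distrib
    by (rule prod.cong) (simp_all add: fk_def fr_def)
  have o: "Od (w^2) = (Po w)^2"
    unfolding Od_def Po_def prod_power_distrib
    by (rule prod.cong) (simp_all add: fk_def fr_def)
  show ?thesis by (simp add: Qf_def e o power_mult_distrib)
qed

lemma HH_root_Qf: "HH w = 0 \<Longrightarrow> Qf (w^2 :: real) = 0"
  by (simp add: Qf_sq HH_def)

lemma HH_0: "HH 0 = -1"
proof -
  have "(\<Prod>k<CARD('n). if even k then fr k 0 else 1) = (\<Prod>k<CARD('n). (1::real))"
    by (rule prod.cong) (simp_all add: fr_def)
  then show ?thesis by (simp add: HH_def Pe_def)
qed

lemma cont_HH: "continuous_on S HH"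
proof -
  have c1: "continuous_on S (\<lambda>w. if even k then fr k w else 1)" for k
    by (cases "even k") (auto simp: fr_def intro!: continuous_intros)
  have c2: "continuous_on S (\<lambda>w. if even k then 1 else fr k w)" for k
    by (cases "even k") (auto simp: fr_def intro!: continuous_intros)
  show ?thesis unfolding HH_def Pe_def Po_def
    by (intro continuous_intros c1 c2)
qed

definition LL :: "real \<Rightarrow> real" where
  "LL w = ln w + (\<Sum>k<CARD('n). - sgk k * ln (fr k w))"

lemma HH_LL: "w > 0 \<Longrightarrow> (HH w > 0 \<longleftrightarrow> LL w > 0) \<and> (HH w < 0 \<longleftrightarrow> LL w < 0)"
proof -
  assume w: "w > 0"
  have lpo: "ln (Po w) = (\<Sum>k<CARD('n). if even k then 0 else ln (fr k w))"
    unfolding Po_def using fr_pos by (subst ln_prod) (auto intro!: sum.cong simp: less_imp_neq[symmetric])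
  have lpe: "ln (Pe w) = (\<Sum>k<CARD('n). if even k then ln (fr k w) else 0)"
    unfolding Pe_def using fr_pos by (subst ln_prod) (auto intro!: sum.cong simp: less_imp_neq[symmetric])
  have "ln (w * Po w) - ln (Pe w) = LL w"
  proof -
    have "ln (w * Po w) = ln w + ln (Po w)" using w Po_pos[of w] by (simp add: ln_mult)
    moreover have "(\<Sum>k<CARD('n). if even k then 0 else ln (fr k w)) - (\<Sum>k<CARD('n). if even k then ln (fr k w) else 0)
          = (\<Sum>k<CARD('n). - sgk k * ln (fr k w))"
      by (simp add: sum_subtractf[symmetric] sgk_def) (rule sum.cong, auto)
    ultimately show ?thesis using lpo lpe by (simp add: LL_def)
  qed
  moreover have "w * Po w > 0" using w Po_pos by simp
  moreover have "Pe w > 0" by (rule Pe_pos)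
  ultimately show ?thesis
  proof -
    assume e: "ln (w * Po w) - ln (Pe w) = LL w" and a: "w * Po w > 0" and b: "Pe w > 0"
    have 1: "Pe w < w * Po w \<longleftrightarrow> ln (Pe w) < ln (w * Po w)" using a b by simp
    have 2: "w * Po w < Pe w \<longleftrightarrow> ln (w * Po w) < ln (Pe w)" using a b by simp
    show ?thesis unfolding HH_def using 1 2 e by linarith
  qed
qed


lemma ln_MM: "ln MM = real (CARD('n) + 1) * ln 2"
  unfolding MM_def by (rule ln_realpow)

lemma fr_at: "fr k (MM^(2*j+1)) = 1 + MM^(4*j+2) / MM^(4*k+2)"
proof -
  have "(MM^(2*j+1))^2 = MM^((2*j+1)*2)" by (rule power_mult[symmetric])
  also have "(2*j+1)*2 = 4*j+2" by simp
  finally have "(MM^(2*j+1))^2 = MM^(4*j+2)" .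
  then show ?thesis by (simp add: fr_def cc_def)
qed

definition mainv :: "nat \<Rightarrow> nat \<Rightarrow> real" where
  "mainv j k = (if k < j then 4 * (real j - real k) * ln MM else 0)"

lemma ln_fr_bound: "\<bar>ln (fr k (MM^(2*j+1))) - mainv j k\<bar> \<le> ln 2"
proof (cases "k < j")
  case True
  define Y where "Y = MM^(4*(j-k))"
  have MM0: "MM \<noteq> 0" and MM1: "MM \<ge> 1" using MM_ge by auto
  have "MM^(4*j+2) / MM^(4*k+2) = MM^(4*j+2 - (4*k+2))"
    by (rule power_diff[symmetric]) (use True MM0 in auto)
  also have "4*j+2 - (4*k+2) = 4*(j-k)" using True by simp
  finally have eqY: "MM^(4*j+2) / MM^(4*k+2) = Y" by (simp only: Y_def)
  have fY: "fr k (MM^(2*j+1)) = 1 + Y" by (simp only: fr_at eqY)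
  have Y1: "Y \<ge> 1" using MM1 by (simp add: Y_def one_le_power)
  have lnY: "ln Y = mainv j k"
  proof -
    have "ln Y = real (4*(j-k)) * ln MM" unfolding Y_def by (rule ln_realpow)
    also have "real (4*(j-k)) = 4 * (real j - real k)" using True by (simp add: of_nat_diff)
    finally show ?thesis using True by (simp add: mainv_def)
  qed
  have "ln Y \<le> ln (1 + Y)" using Y1 by simp
  moreover have "ln (1 + Y) \<le> ln (2 * Y)" using Y1 by simp
  moreover have "ln (2 * Y) = ln 2 + ln Y" using Y1 by (simp add: ln_mult)
  ultimately show ?thesis using fY lnY by simp
next
  case False
  define Y where "Y = MM^(4*j+2) / MM^(4*k+2)"
  have MM1: "MM \<ge> 1" using MM_ge by auto
  have "MM^(4*j+2) \<le> MM^(4*k+2)" using False MM1 by (intro power_increasing) auto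
  then have Y1: "Y \<le> 1" and Y0: "Y > 0" using MM_ge by (auto simp: Y_def)
  have fY: "fr k (MM^(2*j+1)) = 1 + Y" unfolding Y_def by (rule fr_at)
  have "0 \<le> ln (1 + Y)" using Y0 by simp
  moreover have "ln (1 + Y) \<le> ln 2" using Y0 Y1 by simp
  ultimately show ?thesis using fY False by (simp add: mainv_def)
qed

lemma sum_mainv:
  assumes "j \<le> CARD('n)"
  shows "(\<Sum>k<CARD('n). - sgk k * mainv j k) = - 4 * ln MM * (\<Sum>k<j. sgk k * (real j - real k))"
proof -
  have "(\<Sum>k<CARD('n). - sgk k * mainv j k) = (\<Sum>k<CARD('n). if k < j then - 4 * ln MM * (sgk k * (real j - real k)) else 0)"
    by (rule sum.cong) (auto simp: mainv_def)
  also have "\<dots> = (\<Sum>k\<in>{k\<in>{..<CARD('n)}. k < j}. - 4 * ln MM * (sgk k * (real j - real k)))"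
    by (rule sum.inter_filter[symmetric]) simp
  also have "{k\<in>{..<CARD('n)}. k < j} = {..<j}" using assms by auto
  finally show ?thesis by (simp add: sum_distrib_left)
qed

lemma LL_at:
  assumes j: "j \<le> CARD('n)"
  shows "\<bar>LL (MM^(2*j+1)) - sgk j * ln MM\<bar> \<le> real CARD('n) * ln 2"
proof -
  define w where "w = MM^(2*j+1)"
  have w0: "w > 0" using MM_ge by (simp add: w_def)
  have lw: "ln w = real (2*j+1) * ln MM" unfolding w_def by (rule ln_realpow)
  have err: "\<bar>(\<Sum>k<CARD('n). - sgk k * ln (fr k w)) - (\<Sum>k<CARD('n). - sgk k * mainv j k)\<bar> \<le> real CARD('n) * ln 2"
  proof -
    have "\<bar>(\<Sum>k<CARD('n). - sgk k * ln (fr k w)) - (\<Sum>k<CARD('n). - sgk k * mainv j k)\<bar>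
          = \<bar>\<Sum>k<CARD('n). - sgk k * (ln (fr k w) - mainv j k)\<bar>"
      by (simp add: sum_subtractf[symmetric] algebra_simps)
    also have "\<dots> \<le> (\<Sum>k<CARD('n). \<bar>- sgk k * (ln (fr k w) - mainv j k)\<bar>)"
      by (rule sum_abs)
    also have "\<dots> \<le> (\<Sum>k<CARD('n). ln 2)"
    proof (rule sum_mono)
      fix k
      have "\<bar>- sgk k * (ln (fr k w) - mainv j k)\<bar> = \<bar>ln (fr k w) - mainv j k\<bar>"
        by (simp add: sgk_def abs_mult)
      then show "\<bar>- sgk k * (ln (fr k w) - mainv j k)\<bar> \<le> ln 2"
        using ln_fr_bound[of k j] by (simp add: w_def)
    qed
    also have "\<dots> = real CARD('n) * ln 2" by simp
    finally show ?thesis .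
  qed
  have "LL w = ln w + (\<Sum>k<CARD('n). - sgk k * ln (fr k w))" by (simp add: LL_def)
  moreover have "ln w + (\<Sum>k<CARD('n). - sgk k * mainv j k) = sgk j * ln MM"
  proof -
    have "ln w + (\<Sum>k<CARD('n). - sgk k * mainv j k)
          = (real (2*j+1) - 4 * (\<Sum>k<j. sgk k * (real j - real k))) * ln MM"
      using lw sum_mainv[OF j] by (simp add: algebra_simps)
    then show ?thesis using sumA[of j] by simp
  qed
  ultimately show ?thesis using err by (simp add: w_def)
qed

lemma HH_sign:
  assumes j: "j \<le> CARD('n)"
  shows "(even j \<longrightarrow> HH (MM^(2*j+1)) > 0) \<and> (odd j \<longrightarrow> HH (MM^(2*j+1)) < 0)"
proof -
  define w where "w = MM^(2*j+1)"
  have w0: "w > 0" using MM_ge by (simp add: w_def)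
  have l2: "ln (2::real) > 0" by simp
  have b: "\<bar>LL w - sgk j * ln MM\<bar> \<le> real CARD('n) * ln 2" unfolding w_def by (rule LL_at[OF j])
  then have b2: "LL w - sgk j * ln MM \<le> real CARD('n) * ln 2 \<and> - (LL w - sgk j * ln MM) \<le> real CARD('n) * ln 2"
    by (simp only: abs_le_iff)
  have lm: "ln MM = real CARD('n) * ln 2 + ln 2" by (simp add: ln_MM algebra_simps)
  have "(even j \<longrightarrow> HH w > 0) \<and> (odd j \<longrightarrow> HH w < 0)"
  proof (intro conjI impI)
    assume "even j"
    then have "sgk j = 1" by (simp add: sgk_def)
    then have c: "LL w - ln MM \<le> real CARD('n) * ln 2 \<and> - (LL w - ln MM) \<le> real CARD('n) * ln 2"
      using b2 by simp
    then show "HH w > 0" using HH_LL[OF w0] lm l2 by linarith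
  next
    assume "odd j"
    then have "sgk j = -1" by (simp add: sgk_def)
    then have c: "LL w + ln MM \<le> real CARD('n) * ln 2 \<and> - (LL w + ln MM) \<le> real CARD('n) * ln 2"
      using b2 by simp
    then show "HH w < 0" using HH_LL[OF w0] lm l2 by linarith
  qed
  then show ?thesis by (simp only: w_def)
qed

end


lemma ivt_open:
  fixes f :: "real \<Rightarrow> real"
  assumes ab: "a < b" and c: "continuous_on {a..b} f"
    and s: "(f a < 0 \<and> f b > 0) \<or> (f a > 0 \<and> f b < 0)"
  shows "\<exists>r. a < r \<and> r < b \<and> f r = 0"
proof -
  obtain x where x: "a \<le> x" "x \<le> b" "f x = 0"
  proof (cases "f a < 0")
    case True
    then have "f a \<le> 0" "0 \<le> f b" using s by auto
    then show ?thesis using IVT'[of f a 0 b] ab c that by auto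
  next
    case False
    then have "f b \<le> 0" "0 \<le> f a" using s by auto
    then show ?thesis using IVT2'[of f b 0 a] ab c that by auto
  qed
  moreover have "x \<noteq> a" "x \<noteq> b" using x s by auto
  ultimately show ?thesis by (intro exI[of _ x]) auto
qed

lemma sum_odd2: "(\<Sum>k<m. (if even k then 0 else 2::nat)) = 2 * (m div 2)"
proof (induction m)
  case 0 then show ?case by simp
next
  case (Suc m)
  have "(\<Sum>k<Suc m. (if even k then 0 else 2::nat)) = 2 * (m div 2) + (if even m then 0 else 2)"
    using Suc by simp
  also have "\<dots> = 2 * (Suc m div 2)" by presburger
  finally show ?case .
qed

lemma sum_even2: "(\<Sum>k<m. (if even k then 2 else 0::nat)) = 2 * (m - m div 2)"
proof (induction m)
  case 0 then show ?case by simp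
next
  case (Suc m)
  have "(\<Sum>k<Suc m. (if even k then 2 else 0::nat)) = 2 * (m - m div 2) + (if even m then 2 else 0)"
    using Suc by simp
  also have "\<dots> = 2 * (Suc m - Suc m div 2)" by presburger
  finally show ?case .
qed

context cfg
begin

definition aa :: "nat \<Rightarrow> real" where "aa j = (if j = 0 then 0 else MM^(2*j - 1))"

lemma aa_Suc: "aa (Suc j) = MM^(2*j+1)" by (simp add: aa_def)

lemma aa_mono: "j \<le> j' \<Longrightarrow> aa j \<le> aa j'"
proof -
  assume "j \<le> j'"
  then show "aa j \<le> aa j'"
    using MM_ge by (auto simp: aa_def intro!: power_increasing)
qed

lemma aa_nonneg: "aa j \<ge> 0" using MM_ge by (simp add: aa_def)

lemma aa_less: "aa j < aa (Suc j)"
proof (cases j)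
  case 0 then show ?thesis using MM_ge by (simp add: aa_def)
next
  case (Suc i)
  have "MM^(2*j - 1) < MM^(2*j+1)" using MM_ge by (intro power_strict_increasing) auto
  then show ?thesis using Suc by (simp add: aa_def)
qed

lemma root_exists:
  assumes j: "j \<le> CARD('n)"
  shows "\<exists>r. aa j < r \<and> r < aa (Suc j) \<and> HH r = 0"
proof (rule ivt_open[OF aa_less cont_HH])
  show "(HH (aa j) < 0 \<and> HH (aa (Suc j)) > 0) \<or> (HH (aa j) > 0 \<and> HH (aa (Suc j)) < 0)"
  proof (cases j)
    case 0
    then show ?thesis using HH_sign[of 0] HH_0 by (simp add: aa_def)
  next
    case (Suc i)
    have si: "(even i \<longrightarrow> HH (aa j) > 0) \<and> (odd i \<longrightarrow> HH (aa j) < 0)"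
      using HH_sign[of i] j Suc by (simp add: aa_Suc)
    have sj: "(even j \<longrightarrow> HH (aa (Suc j)) > 0) \<and> (odd j \<longrightarrow> HH (aa (Suc j)) < 0)"
      using HH_sign[of j] j by (simp add: aa_Suc)
    show ?thesis using si sj Suc by auto
  qed
qed

lemma roots_obtain:
  obtains rt where "\<And>j. j \<le> CARD('n) \<Longrightarrow> aa j < rt j \<and> rt j < aa (Suc j) \<and> HH (rt j) = 0"
proof -
  have "\<forall>j. \<exists>r. j \<le> CARD('n) \<longrightarrow> aa j < r \<and> r < aa (Suc j) \<and> HH r = 0"
    using root_exists by blast
  then obtain rt where "\<forall>j. j \<le> CARD('n) \<longrightarrow> aa j < rt j \<and> rt j < aa (Suc j) \<and> HH (rt j) = 0"
    by (metis (no_types))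
  then show ?thesis using that by blast
qed

end


context cfg
begin

definition Qp :: "complex poly" where
  "Qp = [:0, 1:] * (\<Prod>k<CARD('n). if even k then 1 else [:1, complex_of_real (cc k):]^2)
        - (\<Prod>k<CARD('n). if even k then [:1, complex_of_real (cc k):]^2 else 1)"

lemma poly_Qp: "poly Qp z = Qf z"
proof -
  have o: "poly (\<Prod>k<CARD('n). if even k then 1 else [:1, complex_of_real (cc k):]^2) z = Od z"
    unfolding poly_prod Od_def by (rule prod.cong) (auto simp: fk_def algebra_simps)
  have e: "poly (\<Prod>k<CARD('n). if even k then [:1, complex_of_real (cc k):]^2 else 1) z = Ev z"
    unfolding poly_prod Ev_def by (rule prod.cong) (auto simp: fk_def algebra_simps)
  show ?thesis unfolding Qp_def Qf_def by (simp only: poly_diff poly_mult o e) simp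
qed

lemma Qf_0: "Qf (0::'a::real_field) = -1"
proof -
  have "Ev (0::'a) = (\<Prod>k<CARD('n). 1)"
    unfolding Ev_def by (rule prod.cong) (auto simp: fk_def)
  then show ?thesis by (simp add: Qf_def)
qed

lemma Qp_nz: "Qp \<noteq> 0"
proof
  assume "Qp = 0"
  then have "poly Qp 0 = 0" by simp
  then show False using Qf_0[where 'a=complex] by (simp add: poly_Qp)
qed

lemma deg_lin2: "degree ([:1, c:]^2) \<le> 2"
proof -
  have "degree ([:1, c:]^2) \<le> degree [:1, c:] * 2" by (rule degree_power_le)
  moreover have "degree [:1, c:] \<le> 1" by simp
  ultimately show ?thesis by linarith
qed

lemma degree_Qp: "degree Qp \<le> CARD('n) + 1"
proof -
  let ?A = "\<Prod>k<CARD('n). if even k then 1 else [:1, complex_of_real (cc k):]^2"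
  let ?B = "\<Prod>k<CARD('n). if even k then [:1, complex_of_real (cc k):]^2 else 1"
  have dA: "degree ?A \<le> 2 * (CARD('n) div 2)"
  proof -
    have "degree ?A \<le> (\<Sum>k<CARD('n). degree (if even k then 1 else [:1, complex_of_real (cc k):]^2))"
      using degree_prod_sum_le[of "{..<CARD('n)}"] by (simp add: o_def)
    also have "\<dots> \<le> (\<Sum>k<CARD('n). (if even k then 0 else 2::nat))"
      by (rule sum_mono) (simp add: deg_lin2)
    also have "\<dots> = 2 * (CARD('n) div 2)" by (rule sum_odd2)
    finally show ?thesis .
  qed
  have dB: "degree ?B \<le> 2 * (CARD('n) - CARD('n) div 2)"
  proof -
    have "degree ?B \<le> (\<Sum>k<CARD('n). degree (if even k then [:1, complex_of_real (cc k):]^2 else 1))"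
      using degree_prod_sum_le[of "{..<CARD('n)}"] by (simp add: o_def)
    also have "\<dots> \<le> (\<Sum>k<CARD('n). (if even k then 2 else 0::nat))"
      by (rule sum_mono) (simp add: deg_lin2)
    also have "\<dots> = 2 * (CARD('n) - CARD('n) div 2)" by (rule sum_even2)
    finally show ?thesis .
  qed
  have "degree ([:0, 1:] * ?A) \<le> degree [:0, (1::complex):] + degree ?A" by (rule degree_mult_le)
  then have d1: "degree ([:0, 1:] * ?A) \<le> CARD('n) + 1" using dA by simp
  have d2: "degree ?B \<le> CARD('n) + 1" using dB by simp
  show ?thesis unfolding Qp_def by (rule degree_diff_le[OF d1 d2])
qed

lemma Qf_of_real: "Qf (complex_of_real t) = complex_of_real (Qf t)"
proof -
  have o: "Od (complex_of_real t) = complex_of_real (Od t)"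
    unfolding Od_def of_real_prod by (rule prod.cong) (auto simp: fk_def)
  have e: "Ev (complex_of_real t) = complex_of_real (Ev t)"
    unfolding Ev_def of_real_prod by (rule prod.cong) (auto simp: fk_def)
  show ?thesis by (simp add: Qf_def o e)
qed

lemma fk_of_real: "fk k (complex_of_real t) = complex_of_real (fk k t)"
  by (simp add: fk_def)

lemma fk_pos: "t > 0 \<Longrightarrow> fk k t > (0::real)"
  using cc_pos[of k] by (simp add: fk_def add_pos_nonneg)

end


context cfg
begin

lemma inj_Xv: "inj_on (Xv :: 'a::real_field \<Rightarrow> 'a^'n) S"
proof (rule inj_onI)
  fix s t :: 'a assume "Xv s = Xv t"
  obtain i where "par i = 0" using ex_par0 by blast
  have "Xv s $ i = Xv t $ i" using \<open>Xv s = Xv t\<close> by simp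
  then have "of_real (cc (par i)) * s = of_real (cc (par i)) * t" by (simp add: Xv_def fk_def)
  moreover have "(of_real (cc (par i)) :: 'a) \<noteq> 0" using cc_pos[of "par i"] by simp
  ultimately show "s = t" by simp
qed

lemma main_counts:
  "finite (complex_torus_solutions cF Cint) \<and>
   card (complex_torus_solutions cF Cint) = CARD('n) + 1 \<and>
   card (positive_solutions cF Cint) = CARD('n) + 1"
proof -
  obtain rt where rt: "\<And>j. j \<le> CARD('n) \<Longrightarrow> aa j < rt j \<and> rt j < aa (Suc j) \<and> HH (rt j) = 0"
    using roots_obtain by blast
  define T where "T = (\<lambda>j. (rt j)^2) ` {..CARD('n)}"
  have rt_pos: "rt j > 0" if "j \<le> CARD('n)" for j using rt[OF that] aa_nonneg[of j] by linarith
  have rt_mono: "rt j < rt j'" if "j < j'" "j' \<le> CARD('n)" for j j'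
  proof -
    have "rt j < aa (Suc j)" using rt[of j] that by auto
    also have "aa (Suc j) \<le> aa j'" using that by (intro aa_mono) auto
    also have "aa j' < rt j'" using rt[of j'] that by auto
    finally show ?thesis .
  qed
  have injT: "inj_on (\<lambda>j. (rt j)^2) {..CARD('n)}"
  proof (rule inj_onI)
    fix j j' assume j: "j \<in> {..CARD('n)}" "j' \<in> {..CARD('n)}" and eq: "(rt j)^2 = (rt j')^2"
    show "j = j'"
    proof (rule ccontr)
      assume "j \<noteq> j'"
      then consider "j < j'" | "j' < j" by linarith
      then show False
      proof cases
        case 1
        then have "(rt j)^2 < (rt j')^2" using rt_mono[of j j'] rt_pos[of j] j
          by (intro power_strict_mono) auto
        then show False using eq by simp
      next
        case 2
        then have "(rt j')^2 < (rt j)^2" using rt_mono[of j' j] rt_pos[of j'] j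
          by (intro power_strict_mono) auto
        then show False using eq by simp
      qed
    qed
  qed
  have cardT: "card T = CARD('n) + 1" unfolding T_def using injT by (simp add: card_image)
  have finT: "finite T" by (simp add: T_def)
  have T_pos: "t > 0" if tT: "t \<in> T" for t
  proof -
    obtain j where "j \<le> CARD('n)" "t = (rt j)^2" using tT by (auto simp: T_def)
    then show ?thesis using rt_pos[of j] by simp
  qed
  have T_root: "Qf t = 0" if "t \<in> T" for t
    using that rt by (auto simp: T_def intro!: HH_root_Qf)
  define Z where "Z = {z. poly Qp z = 0}"
  have finZ: "finite Z" unfolding Z_def by (rule poly_roots_finite[OF Qp_nz])
  have cardZ: "card Z \<le> CARD('n) + 1"
    unfolding Z_def using card_poly_roots_bound[OF Qp_nz] degree_Qp by linarith
  have sub: "complex_of_real ` T \<subseteq> Z"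
    using T_root by (auto simp: Z_def poly_Qp Qf_of_real)
  have card_oT: "card (complex_of_real ` T) = CARD('n) + 1"
    using cardT by (simp add: card_image inj_on_def)
  have ZT: "Z = complex_of_real ` T"
    using card_subset_eq[OF finZ sub] card_oT cardZ card_mono[OF finZ sub] by simp
  have csol: "complex_torus_solutions cF Cint = Xv ` Z"
  proof (intro set_eqI iffI)
    fix x assume "x \<in> complex_torus_solutions cF Cint"
    then have nz: "\<forall>i. x$i \<noteq> 0" and ev: "\<forall>j. laurent_eval cF Cint j x = 0"
      by (auto simp: complex_torus_solutions_def)
    obtain t where "x = Xv t" "Qf t = 0" using sol_char[OF nz] ev by blast
    then show "x \<in> Xv ` Z" by (auto simp: Z_def poly_Qp)
  next
    fix x assume "x \<in> Xv ` Z"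
    then obtain s where s: "s \<in> T" "x = Xv (complex_of_real s)" using ZT by auto
    have nzk: "\<forall>k<CARD('n). fk k (complex_of_real s) \<noteq> 0"
      using fk_pos[OF T_pos[OF s(1)]] by (simp add: fk_of_real order_less_imp_not_eq2)
    have nz: "\<forall>i. x$i \<noteq> 0"
      using s(2) fk_pos[OF T_pos[OF s(1)]] by (simp add: Xv_def fk_of_real order_less_imp_not_eq2)
    have "Qf (complex_of_real s) = 0" using T_root[OF s(1)] by (simp add: Qf_of_real)
    then have "\<forall>j. laurent_eval cF Cint j x = 0" using sol_char[OF nz] s(2) nzk by blast
    then show "x \<in> complex_torus_solutions cF Cint" using nz by (simp add: complex_torus_solutions_def)
  qed
  have psol: "positive_solutions cF Cint = Xv ` T"
  proof (intro set_eqI iffI)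
    fix x assume "x \<in> positive_solutions cF Cint"
    then have pos: "\<forall>i. x$i > 0" and ev: "\<forall>j. laurent_eval cF Cint j x = 0"
      by (auto simp: positive_solutions_def)
    then have nz: "\<forall>i. x$i \<noteq> 0" by (simp add: order_less_imp_not_eq2)
    obtain t where t: "x = Xv t" "Qf t = 0" using sol_char[OF nz] ev by blast
    then have "complex_of_real t \<in> Z" by (simp add: Z_def poly_Qp Qf_of_real)
    then have "t \<in> T" using ZT by (auto simp: of_real_eq_iff)
    then show "x \<in> Xv ` T" using t by blast
  next
    fix x assume "x \<in> Xv ` T"
    then obtain s where s: "s \<in> T" "x = Xv s" by auto
    have pos: "\<forall>i. x$i > 0" using s fk_pos[OF T_pos[OF s(1)]] by (simp add: Xv_def)
    then have nz: "\<forall>i. x$i \<noteq> 0" by (simp add: order_less_imp_not_eq2)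
    have nzk: "\<forall>k<CARD('n). fk k s \<noteq> 0" using fk_pos[OF T_pos[OF s(1)]] by (simp add: order_less_imp_not_eq2)
    have "\<forall>j. laurent_eval cF Cint j x = 0" using sol_char[OF nz] s(2) T_root[OF s(1)] nzk by blast
    then show "x \<in> positive_solutions cF Cint" using pos by (simp add: positive_solutions_def)
  qed
  have "card (complex_torus_solutions cF Cint) = card Z"
    unfolding csol by (rule card_image[OF inj_Xv])
  moreover have "card Z = CARD('n) + 1" using ZT card_oT by simp
  moreover have "card (positive_solutions cF Cint) = card T"
    unfolding psol by (rule card_image[OF inj_Xv])
  moreover have "finite (complex_torus_solutions cF Cint)" unfolding csol using finZ by simp
  ultimately show ?thesis using cardT by simp
qed

end

theorem proposition3p4:
  "\<exists>(C :: (int ^ 'n::finite) set) (c :: 'n \<Rightarrow> int ^ 'n \<Rightarrow> real).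
     nondegenerate_circuit C \<and> supported_on c C \<and> generic_system c C \<and>
     card (positive_solutions c C) = CARD('n) + 1"
proof -
  obtain h where h: "bij_betw h (UNIV :: 'n set) {0..<card (UNIV :: 'n set)}"
    using ex_bij_betw_finite_nat[of "UNIV :: 'n set"] by auto
  have hb: "bij_betw h (UNIV :: 'n set) {..<CARD('n)}" using h by (simp add: atLeast0LessThan)
  interpret cfg h by (unfold_locales) (rule hb)
  have "generic_system cF Cint"
    using main_counts normalized_volume_Cint by (simp add: generic_system_def)
  then show ?thesis
    using nondegenerate_Cint supported main_counts by blast
qed


end
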